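(* Let $\Sigma$ and $\Gamma$ be finite alphabets, each with at least two letters, and let $a,b \in \Sigma$ be distinct letters. For every integer $n \ge 2$, $\mathrm{E}_{\mathcal{I}}((ab)^n ba) = 1 + \frac{2}{n-1}$.
   Context: For a nonempty word $v$ and integer $p\ge 0$, $v^{p/|v|}$ denotes the prefix of length $p$ of $vvv\cdots$. For a nonempty finite word $u$, $\mathrm{E}(u) = \sup\{ r \in \mathbb{Q} : u = v^r \text{ for some nonempty word } v\}$. $\mathcal{I}$ is the set of injective morphisms $\Sigma^* \to \Gamma^*$, and for $w\in\Sigma^+$, $\mathrm{E}_{\mathcal{I}}(w) = \sup\{\mathrm{E}(h(w)) : h \in \mathcal{I}\}$. *)

theory Defs
  imports Complex_Main "HOL-Library.Extended_Real" "HOL-Library.Cardinality"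
begin

text \<open>Words are lists. For a nonempty word v and p \<ge> 0, v^(p/|v|) is the prefix of
length p of vvv...; p copies of v suffice since |v| \<ge> 1.\<close>
definition word_pow :: "'a list \<Rightarrow> nat \<Rightarrow> 'a list" where
  "word_pow v p = take p (concat (replicate p v))"

definition word_exp :: "'a list \<Rightarrow> real" where
  "word_exp u = Sup {r. \<exists>v p. v \<noteq> [] \<and> r = real p / real (length v) \<and> u = word_pow v p}"

definition morph :: "('a \<Rightarrow> 'b list) \<Rightarrow> 'a list \<Rightarrow> 'b list" where
  "morph f w = concat (map f w)"

definition inj_exp :: "'b itself \<Rightarrow> 'a list \<Rightarrow> ereal" where
  "inj_exp _ w = Sup {ereal (word_exp (morph f w)) | f :: 'a \<Rightarrow> 'b list. inj (morph f)}"

end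

theory Submission
  imports Defs
begin

definition per :: "'a list \<Rightarrow> nat \<Rightarrow> bool" where
  "per u q \<longleftrightarrow> (\<forall>i. i + q < length u \<longrightarrow> u!i = u!(i+q))"

lemma perD: "per u q \<Longrightarrow> i + q < length u \<Longrightarrow> u!i = u!(i+q)"
  unfolding per_def by blast

lemma perI: "(\<And>i. i + q < length u \<Longrightarrow> u!i = u!(i+q)) \<Longrightarrow> per u q"
  unfolding per_def by blast

lemma per_take: "per u q \<Longrightarrow> per (take N u) q"
proof (rule perI)
  fix i assume "per u q" "i + q < length (take N u)"
  then show "take N u ! i = take N u ! (i + q)" using perD[of u q i] by simp
qed

lemma per_diff:
  assumes "per w p" "per w q" "p < q" "p + q \<le> length w"
  shows "per w (q - p)"
proof -
  obtain r where r: "q = p + r" using assms(3) less_imp_add_positive by blast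
  have "per w r"
  proof (rule perI)
    fix i assume i: "i + r < length w"
    show "w!i = w!(i+r)"
    proof (cases "i + q < length w")
      case True
      have 1: "w!i = w!(i+q)" using perD[OF assms(2) True] .
      have ii: "i + r + p = i + q" using r by simp
      have 2: "w!(i+r) = w!(i+r+p)" using perD[OF assms(1), of "i+r"] True ii by argo
      show ?thesis using 1 2 ii by argo
    next
      case False
      then have "p \<le> i" using assms(4) by linarith
      then obtain k where k: "i = k + p" using le_Suc_ex by (metis add.commute)
      have kk: "k + q = i + r" using k r by simp
      have 1: "w!k = w!(k+p)" using perD[OF assms(1), of k] i k by simp
      have 2: "w!k = w!(k+q)" using perD[OF assms(2), of k] i kk by argo
      show ?thesis using 1 2 k kk by argo
    qed
  qed
  then show ?thesis using r by simp
qed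

lemma fine_wilf: "per w p \<Longrightarrow> per w q \<Longrightarrow> p + q \<le> length w \<Longrightarrow> per w (gcd p q)"
proof (induction "p+q" arbitrary: p q rule: less_induct)
  case less
  show ?case
  proof (cases "p = 0 \<or> q = 0 \<or> p = q")
    case True
    then consider "p = 0" | "q = 0" | "p = q" by blast
    then show ?thesis
    proof cases
      case 1 then show ?thesis using less.prems(2) by simp
    next
      case 2 then show ?thesis using less.prems(1) by simp
    next
      case 3 then show ?thesis using less.prems(2) by simp
    qed
  next
    case False
    show ?thesis
    proof (cases "p < q")
      case True
      have pq: "per w (q - p)" using per_diff[OF less.prems(1,2) True less.prems(3)] .
      have lt: "p + (q - p) < p + q" using True False by simp
      have le: "p + (q - p) \<le> length w" using True less.prems(3) by simp
      have "per w (gcd p (q - p))" using less.hyps[OF lt less.prems(1) pq le] .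
      moreover have "gcd p (q - p) = gcd p q"
      proof -
        have "gcd (q - p) p = gcd q p" using gcd_diff1_nat[of p q] True by simp
        then show ?thesis by (simp only: gcd.commute)
      qed
      ultimately show ?thesis by simp
    next
      case F2: False
      then have qp: "q < p" using False by auto
      have pq: "per w (p - q)" using per_diff[OF less.prems(2,1) qp] less.prems(3) by simp
      have lt: "(p - q) + q < p + q" using qp False by simp
      have le: "(p - q) + q \<le> length w" using qp less.prems(3) by simp
      have "per w (gcd (p - q) q)" using less.hyps[OF lt pq less.prems(2) le] .
      moreover have "gcd (p - q) q = gcd p q" using qp
        by (simp add: gcd_diff1_nat)
      ultimately show ?thesis by simp
    qed
  qed
qed

lemma per_extend:
  assumes "per u p" "0 < p" "\<forall>i. i + d < N \<longrightarrow> i + d < length u \<longrightarrow> u!i = u!(i+d)"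
    "p + d \<le> N"
  shows "per u d"
proof -
  have "i + d < length u \<longrightarrow> u ! i = u ! (i + d)" for i
  proof (induction i rule: less_induct)
    case (less i)
    show ?case
    proof
      assume i: "i + d < length u"
      show "u ! i = u ! (i + d)"
      proof (cases "i + d < N")
        case True then show ?thesis using assms(3) i by blast
      next
        case False
        then have ip: "i \<ge> p" using assms(4) by linarith
        have e: "i - p + p = i" "i - p + d + p = i + d" using ip by simp_all
        have "u!(i-p) = u!(i-p+p)" using perD[OF assms(1), of "i-p"] i e by simp
        moreover have "u!(i-p+d) = u!(i-p+d+p)" using perD[OF assms(1), of "i-p+d"] i e by simp
        moreover have "i - p < i" using ip assms(2) by simp
        then have "u!(i-p) = u!(i-p+d)" using less.IH[of "i-p"] i by simp
        ultimately show ?thesis using e by simp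
      qed
    qed
  qed
  then show ?thesis by (intro perI) blast
qed

lemma per_mult: "per u d \<Longrightarrow> per u (k*d)"
proof (induction k)
  case 0 then show ?case by (simp add: per_def)
next
  case (Suc k)
  show ?case
  proof (rule perI)
    fix i assume i: "i + Suc k * d < length u"
    have i1: "i + k * d < length u" "i + k * d + d < length u" using i by simp_all
    have "u!i = u!(i+k*d)" using perD[OF Suc.IH[OF Suc.prems] i1(1)] .
    also have "\<dots> = u!(i+k*d+d)" using perD[OF Suc.prems i1(2)] .
    finally show "u!i = u!(i + Suc k * d)" by (simp add: algebra_simps)
  qed
qed

lemma length_concat_replicate[simp]: "length (concat (replicate p v)) = p * length v"
  by (induction p) auto

lemma nth_concat_replicate:
  "i < p * length v \<Longrightarrow> concat (replicate p v) ! i = v ! (i mod length v)"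
proof (induction p arbitrary: i)
  case 0 then show ?case by simp
next
  case (Suc p)
  show ?case
  proof (cases "i < length v")
    case True then show ?thesis by (simp add: nth_append)
  next
    case False
    then have "concat (replicate (Suc p) v) ! i = concat (replicate p v) ! (i - length v)"
      by (simp add: nth_append)
    also have "\<dots> = v ! ((i - length v) mod length v)" using Suc False by auto
    also have "(i - length v) mod length v = i mod length v" using False
      by (simp add: le_mod_geq)
    finally show ?thesis .
  qed
qed

lemma le_mult_len: "1 \<le> (l::nat) \<Longrightarrow> i < p \<Longrightarrow> i < p * l"
  by (simp add: less_le_trans)

lemma word_pow_per:
  assumes "v \<noteq> []" "u = word_pow v p"
  shows "length u = p" "per u (length v)"
proof -
  have lv: "length v \<ge> 1" using assms(1) by (cases v) auto
  show lu: "length u = p" using assms lv by (simp add: word_pow_def)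
  have nth: "u ! i = v ! (i mod length v)" if "i < p" for i
  proof -
    have "i < p * length v" using le_mult_len[OF lv that] .
    then show ?thesis using that assms(2) by (simp add: word_pow_def nth_concat_replicate)
  qed
  show "per u (length v)"
  proof (rule perI)
    fix i assume "i + length v < length u"
    then show "u ! i = u ! (i + length v)" using nth lu by simp
  qed
qed

lemma per_mod: "per u q \<Longrightarrow> 0 < q \<Longrightarrow> i < length u \<Longrightarrow> u!i = u!(i mod q)"
proof (induction i rule: less_induct)
  case (less i)
  show ?case
  proof (cases "i < q")
    case True then show ?thesis by simp
  next
    case False
    have e: "i - q + q = i" using False by simp
    have 1: "u!(i-q) = u!(i-q+q)" using perD[OF less.prems(1), of "i-q"] less.prems(3) e by simp
    have lt: "i - q < i" "i - q < length u" using False less.prems by simp_all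
    have 2: "u!(i-q) = u!((i-q) mod q)" using less.IH[OF lt(1) less.prems(1,2) lt(2)] .
    have 3: "(i-q) mod q = i mod q" using False by (simp add: le_mod_geq)
    show ?thesis using 1 2 3 e by simp
  qed
qed

lemma per_word_pow:
  assumes "per u q" "0 < q" "u \<noteq> []"
  shows "word_pow (take q u) (length u) = u"
proof (rule nth_equalityI)
  let ?v = "take q u"
  have lv: "length ?v = min q (length u)" by simp
  have lv1: "length ?v \<ge> 1" using assms by (cases u) auto
  show "length (word_pow ?v (length u)) = length u"
    using lv1 by (simp add: word_pow_def)
  fix i assume "i < length (word_pow ?v (length u))"
  then have i: "i < length u" using lv1 by (simp add: word_pow_def)
  have "i < length u * length ?v" using le_mult_len[OF lv1 i] .
  then have "word_pow ?v (length u) ! i = ?v ! (i mod length ?v)"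
    using i by (simp add: word_pow_def nth_concat_replicate)
  also have "\<dots> = u ! i"
  proof (cases "q \<le> length u")
    case True
    then show ?thesis using per_mod[OF assms(1,2) i] assms(2) by simp
  next
    case False
    then show ?thesis using i by simp
  qed
  finally show "word_pow ?v (length u) ! i = u ! i" .
qed

lemma word_exp_set_bdd:
  "bdd_above {r. \<exists>v p. v \<noteq> [] \<and> r = real p / real (length v) \<and> u = word_pow v p}"
proof (rule bdd_aboveI[of _ "real (length u)"])
  fix r assume "r \<in> {r. \<exists>v p. v \<noteq> [] \<and> r = real p / real (length v) \<and> u = word_pow v p}"
  then obtain v p where v: "v \<noteq> []" "r = real p / real (length v)" "u = word_pow v p" by blast
  have lu: "length u = p" using word_pow_per(1)[OF v(1,3)] .
  have "real (length v) \<ge> 1" using v(1) by (cases v) auto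
  then have "real p / real (length v) \<le> real p / 1"
    by (intro divide_left_mono) auto
  then show "r \<le> real (length u)" using v(2) lu by simp
qed

lemma word_exp_ge:
  assumes "per u q" "0 < q" "q \<le> length u"
  shows "real (length u) / real q \<le> word_exp u"
proof -
  have ne: "u \<noteq> []" using assms(2,3) by (cases u) auto
  have tq: "take q u \<noteq> []" "length (take q u) = q" using ne assms(2,3) by (cases u, simp_all add: min_def)
  have wp: "u = word_pow (take q u) (length u)" using per_word_pow[OF assms(1,2) ne] by simp
  have "real (length u) / real q \<in> {r. \<exists>v p. v \<noteq> [] \<and> r = real p / real (length v) \<and> u = word_pow v p}"
    using tq wp by (intro CollectI exI[of _ "take q u"] exI[of _ "length u"] conjI) simp_all
  then show ?thesis unfolding word_exp_def by (rule cSup_upper[OF _ word_exp_set_bdd])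
qed

lemma word_exp_le:
  assumes "u \<noteq> []" "\<And>v p. v \<noteq> [] \<Longrightarrow> u = word_pow v p \<Longrightarrow> real p / real (length v) \<le> t"
  shows "word_exp u \<le> t"
  unfolding word_exp_def
proof (rule cSup_least)
  have "per u (length u)" by (simp add: per_def)
  then have "word_pow (take (length u) u) (length u) = u" using per_word_pow[of u "length u"] assms(1) by simp
  then have wp: "u = word_pow u (length u)" by simp
  have "real (length u) / real (length u) \<in> {r. \<exists>v p. v \<noteq> [] \<and> r = real p / real (length v) \<and> u = word_pow v p}"
    using assms(1) wp by (intro CollectI exI[of _ u] exI[of _ "length u"] conjI) simp_all
  then show "{r. \<exists>v p. v \<noteq> [] \<and> r = real p / real (length v) \<and> u = word_pow v p} \<noteq> {}"
    by (metis empty_iff)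
next
  fix r assume "r \<in> {r. \<exists>v p. v \<noteq> [] \<and> r = real p / real (length v) \<and> u = word_pow v p}"
  then obtain v p where "v \<noteq> []" "r = real p / real (length v)" "u = word_pow v p" by blast
  then show "r \<le> t" using assms(2) by simp
qed

lemma morph_nil[simp]: "morph f [] = []" by (simp add: morph_def)
lemma morph_cons[simp]: "morph f (x # xs) = f x @ morph f xs" by (simp add: morph_def)
lemma morph_append[simp]: "morph f (xs @ ys) = morph f xs @ morph f ys" by (simp add: morph_def)
lemma morph_concat_replicate[simp]:
  "morph f (concat (replicate n l)) = concat (replicate n (morph f l))"
  by (induction n) auto

lemma morph_w: "morph f (concat (replicate n [a,b]) @ [b,a])
   = concat (replicate n (f a @ f b)) @ f b @ f a"
  by simp

lemma concat_replicate_comm: "concat (replicate j l) @ l = l @ concat (replicate j l)"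
  by (induction j) auto

lemma upper:
  assumes inj: "inj (morph h)" and ab: "a \<noteq> b" and n: "n \<ge> 2"
    and v: "v \<noteq> []" "morph h (concat (replicate n [a,b]) @ [b,a]) = word_pow v p"
  shows "real p / real (length v) \<le> real (n+1) / real (n-1)"
proof -
  define X where "X = h a"
  define Y where "Y = h b"
  define m where "m = length X + length Y"
  define u where "u = concat (replicate n (X@Y)) @ Y @ X"
  have u: "u = word_pow v p" using v(2) by (simp add: u_def X_def Y_def)
  have hne: "h a \<noteq> []"
  proof
    assume "h a = []"
    then have "morph h [a] = morph h []" by simp
    then have "[a] = []" by (rule injD[OF inj])
    then show False by simp
  qed
  have m0: "m > 0" using hne by (simp add: m_def X_def)
  have lXY: "length (X @ Y) = m" by (simp add: m_def)
  have lu: "length u = (n+1)*m" by (simp add: u_def m_def)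
  have p: "p = (n+1)*m" using word_pow_per(1)[OF v(1) u] lu by simp
  define q where "q = length v"
  have pq: "per u q" using word_pow_per(2)[OF v(1) u] by (simp add: q_def)
  have q0: "q > 0" using v(1) by (simp add: q_def)
  have nm: "n*m = (n-1)*m + m" using n by (cases n) auto
  have key: "(n-1)*m \<le> q"
  proof (rule ccontr)
    assume "\<not> (n-1)*m \<le> q"
    then have qlt: "q < (n-1)*m" by simp
    define N where "N = n*m"
    have lN: "length (take N u) = N" using lu by (simp add: N_def)
    have P: "take N u = concat (replicate n (X@Y))" by (simp add: u_def N_def m_def)
    have perPm: "per (take N u) m" unfolding per_def
    proof (intro allI impI)
      fix i assume i: "i + m < length (take N u)"
      then have i1: "i < n * length (X@Y)" "i + m < n * length (X@Y)" using lN lXY by (auto simp: N_def)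
      show "take N u ! i = take N u ! (i + m)" unfolding P
        using nth_concat_replicate[OF i1(1)] nth_concat_replicate[OF i1(2)] lXY by simp
    qed
    have perPq: "per (take N u) q" using per_take[OF pq] .
    have "per (take N u) (gcd q m)" using fine_wilf[OF perPq perPm] lN qlt nm by (simp add: N_def)
    define d where "d = gcd q m"
    have d0: "d > 0" using m0 by (simp add: d_def)
    have dm: "d \<le> m" using m0 by (simp add: d_def)
    have ddvd: "d dvd m" by (simp add: d_def)
    have perPd: "per (take N u) d" using \<open>per (take N u) (gcd q m)\<close> by (simp add: d_def)
    have "per u d"
    proof (rule per_extend[OF pq q0])
      show "\<forall>i. i + d < N \<longrightarrow> i + d < length u \<longrightarrow> u ! i = u ! (i + d)"
      proof (intro allI impI)
        fix i assume i: "i + d < N" "i + d < length u"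
        have "take N u ! i = take N u ! (i + d)" using perD[OF perPd] i lN by simp
        then show "u ! i = u ! (i + d)" using i by simp
      qed
      show "q + d \<le> N" using qlt dm nm by (simp add: N_def)
    qed
    then have "per u ((m div d) * d)" by (rule per_mult)
    then have "per u m" using ddvd by simp
    then have pnm: "per u (n*m)" by (rule per_mult)
    have "X @ Y = Y @ X"
    proof (rule nth_equalityI)
      show "length (X @ Y) = length (Y @ X)" by simp
      fix j assume j: "j < length (X @ Y)"
      have u1: "u = (X @ Y) @ (concat (replicate (n-1) (X@Y)) @ Y @ X)"
        using n by (cases n) (auto simp: u_def)
      have "(X @ Y) ! j = u ! j" using j by (simp add: u1 nth_append del: append_assoc)
      also have "\<dots> = u ! (j + n*m)" using perD[OF pnm, of j] j lu lXY by simp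
      also have "\<dots> = (Y @ X) ! j" using lXY by (simp add: u_def nth_append del: append_assoc)
      finally show "(X @ Y) ! j = (Y @ X) ! j" .
    qed
    then have "morph h [a,b] = morph h [b,a]" by (simp add: X_def Y_def)
    then have "[a,b] = [b,a]" by (rule injD[OF inj])
    then show False using ab by simp
  qed
  have n1: "real (n-1) > 0" using n by simp
  have qpos: "real q \<ge> real (n-1) * real m" using key by (metis of_nat_le_iff of_nat_mult)
  have pos: "0 < real (n-1) * real m" using n1 m0 by simp
  have "0 < real q" using pos qpos by linarith
  then have pos2: "0 < real q * (real (n-1) * real m)" using pos by (rule mult_pos_pos)
  have "real p / real q \<le> real p / (real (n-1) * real m)"
    by (rule divide_left_mono[OF qpos _ pos2]) simp
  also have "\<dots> = real (n+1) * real m / (real (n-1) * real m)" by (simp only: p of_nat_mult)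
  also have "\<dots> = real (n+1) / real (n-1)" using m0 by (intro nonzero_mult_divide_mult_cancel_right) simp
  finally show ?thesis by (simp add: q_def)
qed

lemma rep_eq: "c \<noteq> d \<Longrightarrow> replicate i c @ d # s = replicate k c @ d # t \<Longrightarrow> i = k"
proof (induction i arbitrary: k)
  case 0 then show ?case by (cases k) auto
next
  case (Suc i) then show ?case by (cases k) auto
qed

lemma inj_morph_prefix:
  assumes "\<forall>z. f z \<noteq> []" "\<forall>z z' s t. f z @ s = f z' @ t \<longrightarrow> z = z'"
  shows "inj (morph f)"
proof -
  have "\<forall>y. morph f x = morph f y \<longrightarrow> x = y" for x
  proof (induction x)
    case Nil
    show ?case
    proof (intro allI impI)
      fix y assume "morph f [] = morph f y"
      then show "[] = y" using assms(1) by (cases y) auto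
    qed
  next
    case (Cons z x)
    show ?case
    proof (intro allI impI)
      fix y assume e: "morph f (z # x) = morph f y"
      show "z # x = y"
      proof (cases y)
        case Nil then show ?thesis using e assms(1) by auto
      next
        case (Cons z' y')
        then have eq: "f z @ morph f x = f z' @ morph f y'" using e by simp
        have zz: "z = z'" by (rule assms(2)[rule_format, OF eq])
        then have "morph f x = morph f y'" using \<open>f z @ morph f x = f z' @ morph f y'\<close> by simp
        then show ?thesis using Cons.IH zz Cons by simp
      qed
    qed
  qed
  then show ?thesis unfolding inj_def by blast
qed

lemma per_prefix: "drop q u @ r = u \<Longrightarrow> per u q"
proof (rule perI)
  fix i assume e: "drop q u @ r = u" and i: "i + q < length u"
  have "u ! i = (drop q u @ r) ! i" using e by simp
  also have "\<dots> = (drop q u) ! i"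
  proof -
    have "i < length (drop q u)" using i by simp
    then show ?thesis by (simp add: nth_append)
  qed
  also have "\<dots> = u ! (i + q)" using i by (simp add: add.commute)
  finally show "u ! i = u ! (i + q)" .
qed

lemma lower:
  fixes a b :: "'a::finite" and b0 b1 :: 'b
  assumes ab: "a \<noteq> b" and b01: "b0 \<noteq> b1" and n: "n \<ge> 2"
  shows "\<exists>f::'a \<Rightarrow> 'b list. inj (morph f) \<and>
     real ((n+1)*(2*j+5)) / real ((n-1)*(2*j+5)+2) \<le> word_exp (morph f (concat (replicate n [a,b]) @ [b,a]))"
proof -
  have "finite (UNIV::'a set)" by simp
  from finite_imp_inj_to_nat_seg[OF this]
  obtain g :: "'a \<Rightarrow> nat" and N where "g ` UNIV = {i. i < N}" "inj_on g UNIV" by blast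
  then have g: "inj g" by simp
  define c' where "c' = concat (replicate j [b0,b1])"
  define c where "c = [b0,b1] @ c'"
  have cc: "c = c' @ [b0,b1]" using concat_replicate_comm[of j "[b0,b1]"] by (simp add: c_def c'_def)
  have lc: "length c = 2*j+2" by (simp add: c_def c'_def)
  define f :: "'a \<Rightarrow> 'b list" where
    "f z = (if z = a then c @ [b0] else if z = b then [b1,b0] else replicate (g z + 2) b1 @ [b0])" for z
  have fa: "f a @ s = b0 # (b1 # c' @ b0 # s)" for s by (simp add: f_def c_def)
  have fb: "f b @ s = b1 # b0 # s" for s using ab by (simp add: f_def)
  have fo: "z \<noteq> a \<Longrightarrow> z \<noteq> b \<Longrightarrow> f z @ s = b1 # b1 # (replicate (g z) b1 @ b0 # s)" for z s
    by (simp add: f_def)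
  have fne: "\<forall>z. f z \<noteq> []" by (simp add: f_def)
  have hd: "hd (f z @ s) = (if z = a then b0 else b1)" for z s
  proof (cases "z = a")
    case True then show ?thesis using fa by simp
  next
    case False then show ?thesis using fb fo by (cases "z = b") simp_all
  qed
  have sn: "z \<noteq> a \<Longrightarrow> (f z @ s) ! 1 = (if z = b then b0 else b1)" for z s
    using fb fo by (cases "z = b") simp_all
  have pre: "\<forall>z z' s t. f z @ s = f z' @ t \<longrightarrow> z = z'"
  proof (intro allI impI)
    fix z z' s t assume e: "f z @ s = f z' @ t"
    have h: "(z = a) = (z' = a)" using hd[of z s] hd[of z' t] e b01 by (cases "z = a"; cases "z' = a") simp_all
    show "z = z'"
    proof (cases "z = a")
      case True then show ?thesis using h by simp
    next
      case za: False
      then have za': "z' \<noteq> a" using h by simp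
      have h2: "(z = b) = (z' = b)" using sn[OF za, of s] sn[OF za', of t] e b01
        by (cases "z = b"; cases "z' = b") simp_all
      show ?thesis
      proof (cases "z = b")
        case True then show ?thesis using h2 by simp
      next
        case zb: False
        then have zb': "z' \<noteq> b" using h2 by simp
        have "replicate (g z) b1 @ b0 # s = replicate (g z') b1 @ b0 # t"
          using e fo[OF za zb, of s] fo[OF za' zb', of t] by simp
        then have "g z = g z'" using rep_eq b01 by metis
        then show ?thesis using g by (simp add: inj_eq)
      qed
    qed
  qed
  have inj: "inj (morph f)" by (rule inj_morph_prefix[OF fne pre])
  define X where "X = c @ [b0]"
  define Y where "Y = [b1, b0]"
  have fX: "f a = X" by (simp add: f_def X_def)
  have fY: "f b = Y" using ab by (simp add: f_def Y_def)
  define m where "m = 2*j+5"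
  have lXY: "length (X @ Y) = m" using lc by (simp add: X_def Y_def m_def)
  define u where "u = morph f (concat (replicate n [a,b]) @ [b,a])"
  have u: "u = concat (replicate n (X@Y)) @ Y @ X" by (simp add: u_def fX fY)
  have lu: "length u = (n+1)*m" using lXY by (simp add: u)
  obtain n2 where n2: "n = Suc (Suc n2)" using n by (metis add_2_eq_Suc le_Suc_ex)
  define R where "R = concat (replicate (Suc n2) (X@Y))"
  have lR: "length R = (n-1)*m" using lXY n2 by (simp add: R_def)
  have u1: "u = R @ (X@Y) @ Y @ X"
    using concat_replicate_comm[of "Suc n2" "X@Y"] by (simp add: u R_def n2)
  define q where "q = (n-1)*m + 2"
  have XY: "X @ Y = c @ [b0,b1,b0]" by (simp add: X_def Y_def)
  have dq: "drop q u = c @ [b0,b1,b0] @ c @ [b0]"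
  proof -
    have qq: "q = length R + 2" by (simp add: q_def lR)
    have gen: "drop (length R' + k) (R' @ Z) = drop k Z" for R' Z :: "'b list" and k by simp
    have "drop q u = drop 2 ((X@Y) @ Y @ X)" unfolding qq u1 by (rule gen)
    also have "(X@Y) @ Y @ X = b0 # b1 # (c' @ [b0,b1]) @ [b0,b1,b0] @ c @ [b0]"
      by (simp add: X_def Y_def c_def)
    finally show ?thesis using cc by simp
  qed
  define rest where "rest = concat (replicate n2 (X@Y)) @ Y @ X"
  have u2: "u = (c @ [b0,b1,b0] @ c @ [b0]) @ [b1,b0] @ rest"
    by (simp add: u n2 rest_def XY)
  have "drop q u @ ([b1,b0] @ rest) = u" using dq u2 by simp
  then have pq: "per u q" by (rule per_prefix)
  have q0: "0 < q" by (simp add: q_def)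
  have ql: "q \<le> length u" using lu n by (simp add: q_def m_def n2)
  have "real (length u) / real q \<le> word_exp u" by (rule word_exp_ge[OF pq q0 ql])
  then have "real ((n+1)*(2*j+5)) / real ((n-1)*(2*j+5)+2) \<le> word_exp u"
    by (simp only: lu q_def m_def)
  then show ?thesis using inj by (auto simp: u_def)
qed

lemma approx:
  assumes n: "n \<ge> 2" and s: "s < real (n+1) / real (n-1)"
  shows "\<exists>j. s < real ((n+1)*(2*j+5)) / real ((n-1)*(2*j+5)+2)"
proof -
  define N1 where "N1 = real (n+1)"
  define N2 where "N2 = real (n-1)"
  have N2p: "N2 > 0" using n by (simp add: N2_def)
  have "s * N2 < N1" using s N2p by (simp add: N1_def N2_def less_divide_eq)
  define dl where "dl = N1 - s * N2"
  have dlp: "dl > 0" using \<open>s * N2 < N1\<close> by (simp add: dl_def)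
  obtain j :: nat where j: "2 * \<bar>s\<bar> / dl < real j" using reals_Archimedean2 by blast
  define M where "M = real (2*j+5)"
  have "2 * \<bar>s\<bar> < real j * dl" using j dlp by (simp add: divide_less_eq)
  moreover have "real j * dl \<le> M * dl" using dlp by (intro mult_right_mono) (simp_all add: M_def)
  ultimately have "2 * s < M * dl" by linarith
  moreover have "M * dl = N1 * M - s * (N2 * M)" by (simp add: dl_def algebra_simps)
  ultimately have k: "s * (N2 * M + 2) < N1 * M" by (simp add: algebra_simps)
  have Mp: "M > 0" by (simp add: M_def)
  have dp: "N2 * M + 2 > 0" using N2p Mp by (simp add: add_pos_pos)
  have "s < N1 * M / (N2 * M + 2)" using k dp by (simp add: less_divide_eq)
  moreover have "real ((n+1)*(2*j+5)) = N1 * M" by (simp only: N1_def M_def of_nat_mult)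
  moreover have "real ((n-1)*(2*j+5)+2) = N2 * M + 2" by (simp only: N2_def M_def of_nat_mult of_nat_add of_nat_numeral)
  ultimately have "s < real ((n+1)*(2*j+5)) / real ((n-1)*(2*j+5)+2)" by (simp only:)
  then show ?thesis by blast
qed

theorem theorem8:
  fixes a b :: "'a::finite" and n :: nat
  assumes "CARD('a) \<ge> 2" and "CARD('b::finite) \<ge> 2"
    and "a \<noteq> b" and "n \<ge> 2"
  shows "inj_exp TYPE('b) (concat (replicate n [a, b]) @ [b, a])
         = ereal (1 + 2 / (real n - 1))"
proof -
  define w where "w = concat (replicate n [a, b]) @ [b, a]"
  define A where "A = {ereal (word_exp (morph f w)) | f :: 'a \<Rightarrow> 'b list. inj (morph f)}"
  define t where "t = real (n+1) / real (n-1)"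
  have n1: "real (n-1) = real n - 1" using assms(4) by simp
  have tt: "1 + 2 / (real n - 1) = t"
  proof -
    have "real n - 1 > 0" using assms(4) by simp
    then show ?thesis unfolding t_def n1 by (simp add: field_simps)
  qed
  have lhs: "inj_exp TYPE('b) w = Sup A" by (simp add: inj_exp_def A_def)
  have "\<exists>b0 b1::'b. b0 \<noteq> b1"
  proof (rule ccontr)
    assume "\<not> (\<exists>b0 b1::'b. b0 \<noteq> b1)"
    then have "\<forall>x::'b. x = undefined" by blast
    then have "(UNIV::'b set) = {undefined}" by blast
    then have "CARD('b) = card {undefined::'b}" by (rule arg_cong)
    then have "CARD('b) = 1" by simp
    then show False using assms(2) by simp
  qed
  then obtain b0 b1 :: 'b where b01: "b0 \<noteq> b1" by blast
  have ub: "y \<le> ereal t" if "y \<in> A" for y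
  proof -
    obtain f :: "'a \<Rightarrow> 'b list" where f: "inj (morph f)" "y = ereal (word_exp (morph f w))"
      using \<open>y \<in> A\<close> unfolding A_def by blast
    have "morph f w \<noteq> morph f []"
    proof
      assume "morph f w = morph f []"
      then have "w = []" by (rule injD[OF f(1)])
      then show False by (simp add: w_def)
    qed
    then have ne: "morph f w \<noteq> []" by simp
    have "word_exp (morph f w) \<le> t"
    proof (rule word_exp_le[OF ne])
      fix v p assume "v \<noteq> []" "morph f w = word_pow v p"
      then show "real p / real (length v) \<le> t"
        unfolding t_def using upper[OF f(1) assms(3) assms(4)] w_def by blast
    qed
    then show ?thesis using f(2) by simp
  qed
  have lb: "ereal (real ((n+1)*(2*j+5)) / real ((n-1)*(2*j+5)+2)) \<le> Sup A" for j
  proof -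
    obtain f :: "'a \<Rightarrow> 'b list" where f: "inj (morph f)"
      "real ((n+1)*(2*j+5)) / real ((n-1)*(2*j+5)+2) \<le> word_exp (morph f w)"
      using lower[OF assms(3) b01 assms(4), of j] unfolding w_def by blast
    have "ereal (word_exp (morph f w)) \<in> A" using f(1) unfolding A_def by blast
    then have "ereal (word_exp (morph f w)) \<le> Sup A" by (rule Sup_upper)
    moreover have "ereal (real ((n+1)*(2*j+5)) / real ((n-1)*(2*j+5)+2)) \<le> ereal (word_exp (morph f w))"
      using f(2) by simp
    ultimately show ?thesis by (rule order_trans[rotated])
  qed
  have "Sup A = ereal t"
  proof (rule antisym)
    show "Sup A \<le> ereal t" using ub by (rule Sup_least)
    show "ereal t \<le> Sup A"
    proof (cases "Sup A" rule: ereal_cases)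
      case (real r)
      show ?thesis
      proof (rule ccontr)
        assume "\<not> ereal t \<le> Sup A"
        then have "r < t" using real by simp
        then obtain j where j: "r < real ((n+1)*(2*j+5)) / real ((n-1)*(2*j+5)+2)"
          using approx[OF assms(4)] unfolding t_def by blast
        have "ereal (real ((n+1)*(2*j+5)) / real ((n-1)*(2*j+5)+2)) \<le> ereal r" using lb[of j] real by simp
        then show False using j by simp
      qed
    next
      case PInf then show ?thesis by simp
    next
      case MInf
      then show ?thesis using lb[of 0] by simp
    qed
  qed
  then show ?thesis using lhs tt by (simp add: w_def)
qed

end
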